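(* Let $Y_1,Y_2,\ldots$ be i.i.d. Bernoulli$(1/2)$ and let $(Z^k)_k$ be generated by the bit-drop scheme described in the context, independently of $(Y_i)$. For $0\le k\le n$ let $L^a_n(k)$ be the length of a longest common subsequence of $Z^k$ and $Y_1\ldots Y_n$. Let $E^n_1:=\bigcap_{k=1}^{\lfloor 0.45n\rfloor}\{L^a_n(k)=k\}$. Then $\lim_{n\to\infty}P(E^n_1)=1$.
   Context: Bit-drop scheme: let $V_1,V_2,\ldots$ be i.i.d. Bernoulli$(1/2)$ and let $T_3,T_4,\ldots$ be independent, independent of $(V_k)$, with $T_{k+1}$ uniform on $\{2,\ldots,k\}$. Set $Z^2:=V_1V_2$ and, given $Z^k=Z^k_1\ldots Z^k_k$, define $Z^{k+1}_j:=Z^k_j$ for $j<T_{k+1}$, $Z^{k+1}_{T_{k+1}}:=V_{k+1}$, $Z^{k+1}_j:=Z^k_{j-1}$ for $T_{k+1}<j\le k+1$. Convention: $Z^0$ empty, $Z^1:=V_1$. *)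

theory Defs
  imports "HOL-Probability.Probability" "HOL-Library.Sublist"
begin

definition lcs_len :: "'a list \<Rightarrow> 'a list \<Rightarrow> nat" where
  "lcs_len a b = Max {length c | c. subseq c a \<and> subseq c b}"

definition bitdrop_step :: "bool list \<Rightarrow> nat \<Rightarrow> bool \<Rightarrow> bool list" where
  "bitdrop_step z t v = take (t - 1) z @ [v] @ drop (t - 1) z"

text \<open>Z^k built from V_1, V_2, ... and T_3, T_4, ... (functions indexed from 1).\<close>
fun bitdrop_Z :: "(nat \<Rightarrow> bool) \<Rightarrow> (nat \<Rightarrow> nat) \<Rightarrow> nat \<Rightarrow> bool list" where
  "bitdrop_Z V T 0 = []"
| "bitdrop_Z V T (Suc 0) = [V 1]"
| "bitdrop_Z V T (Suc (Suc 0)) = [V 1, V 2]"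
| "bitdrop_Z V T (Suc (Suc (Suc k))) =
     bitdrop_step (bitdrop_Z V T (Suc (Suc k))) (T (k + 3)) (V (k + 3))"

text \<open>Joint law of (V_1..V_n), (T_3..T_n), (Y_1..Y_n): all independent,
  V_i, Y_i Bernoulli(1/2), T_k uniform on {2..k-1}.  Coordinates outside the
  index ranges are fixed defaults and irrelevant.\<close>
definition bitdrop_law :: "nat \<Rightarrow> ((nat \<Rightarrow> bool) \<times> (nat \<Rightarrow> nat) \<times> (nat \<Rightarrow> bool)) pmf" where
  "bitdrop_law n =
     pair_pmf (Pi_pmf {1..n} False (\<lambda>_. bernoulli_pmf (1/2)))
       (pair_pmf (Pi_pmf {3..n} 0 (\<lambda>k. pmf_of_set {2..k - 1}))
                 (Pi_pmf {1..n} False (\<lambda>_. bernoulli_pmf (1/2))))"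

definition E1 :: "nat \<Rightarrow> ((nat \<Rightarrow> bool) \<times> (nat \<Rightarrow> nat) \<times> (nat \<Rightarrow> bool)) set" where
  "E1 n = {(V, T, Y). \<forall>k \<in> {1..nat \<lfloor>(45/100) * real n\<rfloor>}.
             lcs_len (bitdrop_Z V T k) (map Y [1..<n+1]) = k}"

end

theory Submission
  imports Defs "HOL-Real_Asymp.Real_Asymp"
begin

lemma length_bitdrop_step: "length (bitdrop_step z t v) = Suc (length z)"
  unfolding bitdrop_step_def by simp

lemma subseq_bitdrop_step: "subseq z (bitdrop_step z t v)"
proof -
  have "subseq (take (t - 1) z @ drop (t - 1) z) (take (t - 1) z @ ([v] @ drop (t - 1) z))"
    by (intro list_emb_append_mono) auto
  then show ?thesis unfolding bitdrop_step_def by simp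
qed

lemma length_Z: "length (bitdrop_Z V T k) = k"
  by (induction V T k rule: bitdrop_Z.induct) (auto simp: length_bitdrop_step)

lemma subseq_Z_Suc: "subseq (bitdrop_Z V T k) (bitdrop_Z V T (Suc k))"
proof (cases k)
  case (Suc j)
  then show ?thesis
  proof (cases j)
    case (Suc i)
    then show ?thesis using \<open>k = Suc j\<close> subseq_bitdrop_step by simp
  qed simp
qed simp

lemma subseq_Z_mono: "k \<le> m \<Longrightarrow> subseq (bitdrop_Z V T k) (bitdrop_Z V T m)"
proof (induction m rule: dec_induct)
  case (step m)
  then show ?case using subseq_Z_Suc subseq_order.order_trans by blast
qed auto

lemma lcs_len_subseq:
  assumes "subseq a b" shows "lcs_len a b = length a"
proof -
  have fin: "finite {length c | c. subseq c a \<and> subseq c b}"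
    by (rule finite_subset[of _ "{..length a}"]) (auto dest: list_emb_length)
  show ?thesis unfolding lcs_len_def
    by (rule Max_eqI[OF fin]) (use assms in \<open>auto dest: list_emb_length\<close>)
qed

lemma emeasure_pair_pmf_sections:
  "emeasure (measure_pmf (pair_pmf A B)) S = (\<integral>\<^sup>+a. emeasure (measure_pmf B) {b. (a,b) \<in> S} \<partial>A)"
proof -
  have "emeasure (measure_pmf (pair_pmf A B)) S = (\<integral>\<^sup>+x. indicator S x \<partial>pair_pmf A B)"
    by simp
  also have "\<dots> = (\<integral>\<^sup>+a. \<integral>\<^sup>+b. indicator S (a, b) \<partial>B \<partial>A)"
    by (rule nn_integral_pair_pmf')
  also have "\<dots> = (\<integral>\<^sup>+a. emeasure (measure_pmf B) {b. (a,b) \<in> S} \<partial>A)"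
  proof (intro nn_integral_cong)
    fix a
    have "(\<integral>\<^sup>+b. indicator S (a, b) \<partial>B) = (\<integral>\<^sup>+b. indicator {b. (a,b) \<in> S} b \<partial>B)"
      by (intro nn_integral_cong) (simp add: indicator_def)
    also have "\<dots> = emeasure (measure_pmf B) {b. (a,b) \<in> S}" by simp
    finally show "(\<integral>\<^sup>+b. indicator S (a, b) \<partial>B) = emeasure (measure_pmf B) {b. (a,b) \<in> S}" .
  qed
  finally show ?thesis .
qed

lemma emeasure_binomial_Suc:
  "emeasure (measure_pmf (binomial_pmf (Suc n) (1/2))) {Suc m..} =
     (emeasure (measure_pmf (binomial_pmf n (1/2))) {m..} +
      emeasure (measure_pmf (binomial_pmf n (1/2))) {Suc m..}) / 2"
proof -
  have eq: "bind_pmf (binomial_pmf n (1/2)) (\<lambda>k. return_pmf ((if b then 1 else 0) + k))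
           = map_pmf (\<lambda>k. (if b then 1 else 0) + k) (binomial_pmf n (1/2))" for b :: bool
    by (simp add: map_pmf_def)
  have "emeasure (measure_pmf (binomial_pmf (Suc n) (1/2))) {Suc m..} =
    (\<integral>\<^sup>+b. emeasure (measure_pmf (binomial_pmf n (1/2))) ((\<lambda>k. (if b then 1 else 0) + k) -` {Suc m..}) \<partial>bernoulli_pmf (1/2))"
    by (simp add: binomial_pmf_Suc eq del: emeasure_map_pmf) (simp)
  also have "\<dots> = emeasure (measure_pmf (binomial_pmf n (1/2))) ((\<lambda>k. 1 + k) -` {Suc m..}) * ennreal (1/2)
      + emeasure (measure_pmf (binomial_pmf n (1/2))) ((\<lambda>k. 0 + k) -` {Suc m..}) * ennreal (1 - 1/2)"
    by (subst nn_integral_bernoulli_pmf) auto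
  also have "(\<lambda>k::nat. 1 + k) -` {Suc m..} = {m..}" by auto
  also have "(\<lambda>k::nat. 0 + k) -` {Suc m..} = {Suc m..}" by auto
  finally show ?thesis
    by (simp add: ennreal_divide_times divide_ennreal_def add_divide_distrib_ennreal distrib_right)
qed

lemma Pi_subseq:
  "emeasure (measure_pmf (Pi_pmf {a..<a+n} False (\<lambda>_. bernoulli_pmf (1/2))))
      {Y. subseq X (map Y [a..<a+n])} =
   emeasure (measure_pmf (binomial_pmf n (1/2))) {length X..}"
proof (induction n arbitrary: a X)
  case 0
  show ?case by (cases X) (simp_all add: indicator_def binomial_pmf_0)
next
  case (Suc n)
  show ?case
  proof (cases X)
    case Nil
    have "{Y. subseq X (map Y [a..<a+Suc n])} = UNIV" using Nil by simp
    moreover have "{length X..} = UNIV" using Nil by simp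
    ultimately show ?thesis by (simp add: measure_pmf.emeasure_space_1[simplified])
  next
    case (Cons x X')
    let ?P = "Pi_pmf {Suc a..<Suc a+n} False (\<lambda>_. bernoulli_pmf (1/2))"
    let ?B = "binomial_pmf n (1/2)"
    have set: "{a..<a+Suc n} = insert a {Suc a..<Suc a+n}" by auto
    have mp: "map (f(a:=y)) [a..<a+Suc n] = y # map f [Suc a..<Suc a+n]" for f and y :: bool
      by (simp add: upt_conv_Cons)
    have "emeasure (measure_pmf (Pi_pmf {a..<a+Suc n} False (\<lambda>_. bernoulli_pmf (1/2))))
      {Y. subseq X (map Y [a..<a+Suc n])} =
      emeasure (measure_pmf (pair_pmf (bernoulli_pmf (1/2)) ?P))
        ((\<lambda>(y, f). f(a := y)) -` {Y. subseq X (map Y [a..<a+Suc n])})"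
      unfolding set by (subst Pi_pmf_insert) auto
    also have "\<dots> = (\<integral>\<^sup>+y. emeasure (measure_pmf ?P) {f. subseq X (y # map f [Suc a..<Suc a+n])}
                   \<partial>bernoulli_pmf (1/2))"
    proof -
      have pre: "(\<lambda>(y, f). f(a := y)) -` {Y. subseq X (map Y [a..<a+Suc n])}
         = {(y, f). subseq X (y # map f [Suc a..<Suc a+n])}"
        using mp by (auto simp del: upt_Suc)
      show ?thesis unfolding pre emeasure_pair_pmf_sections by (simp del: upt_Suc)
    qed
    also have "\<dots> = (\<integral>\<^sup>+y. (if x = y then emeasure (measure_pmf ?B) {length X'..}
                              else emeasure (measure_pmf ?B) {Suc (length X')..}) \<partial>bernoulli_pmf (1/2))"
    proof (intro nn_integral_cong)
      fix y
      show "emeasure (measure_pmf ?P) {f. subseq X (y # map f [Suc a..<Suc a+n])} =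
        (if x = y then emeasure (measure_pmf ?B) {length X'..}
                              else emeasure (measure_pmf ?B) {Suc (length X')..})"
      proof (cases "x = y")
        case True
        then show ?thesis using Suc.IH[of "Suc a" X'] Cons by (simp del: upt_Suc)
      next
        case False
        then have "{f. subseq X (y # map f [Suc a..<Suc a+n])} = {f. subseq X (map f [Suc a..<Suc a+n])}"
          using Cons by (simp del: upt_Suc)
        then show ?thesis using False Suc.IH[of "Suc a" X] Cons by (simp del: upt_Suc)
      qed
    qed
    also have "\<dots> = (emeasure (measure_pmf ?B) {length X'..} + emeasure (measure_pmf ?B) {Suc (length X')..}) / 2"
      by (cases x) (simp_all add: ennreal_divide_times divide_ennreal_def distrib_right add.commute)
    also have "\<dots> = emeasure (measure_pmf (binomial_pmf (Suc n) (1/2))) {length X..}"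
      using Cons by (simp add: emeasure_binomial_Suc)
    finally show ?thesis .
  qed
qed

lemma tail_bound:
  assumes n: "n > 0" and m: "real m \<le> (45/100) * real n"
  shows "measure_pmf.prob (binomial_pmf n (1/2)) {m..} \<ge> 1 - exp (-2 * real n * (1/20)\<^sup>2)"
proof -
  have "measure_pmf.prob (binomial_pmf n (1/2)) {..<m} \<le>
        measure_pmf.prob (binomial_pmf n (1/2)) {x. real x / real n \<le> 1/2 - 1/20}"
  proof (rule measure_pmf.finite_measure_mono)
    show "{..<m} \<subseteq> {x. real x / real n \<le> 1/2 - 1/20}"
    proof
      fix x assume "x \<in> {..<m}"
      then have "real x \<le> (45/100) * real n" using m by simp
      then show "x \<in> {x. real x / real n \<le> 1/2 - 1/20}" using n by (simp add: field_simps)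
    qed
  qed simp
  also have "\<dots> \<le> exp (-2 * real n * (1/20)\<^sup>2)"
    using binomial_distribution.prob_le'[of "1/2" n "1/20"] n
    by (simp add: binomial_distribution_def)
  finally have le: "measure_pmf.prob (binomial_pmf n (1/2)) {..<m} \<le> exp (-2 * real n * (1/20)\<^sup>2)" .
  have "{m..} = UNIV - {..<m}" by auto
  then have "measure_pmf.prob (binomial_pmf n (1/2)) {m..} = 1 - measure_pmf.prob (binomial_pmf n (1/2)) {..<m}"
    using measure_pmf.prob_compl[of "{..<m}" "binomial_pmf n (1/2)"] by simp
  with le show ?thesis by simp
qed

lemma main_bound:
  assumes n: "n > 0"
  shows "measure_pmf.prob (bitdrop_law n) (E1 n) \<ge> 1 - exp (-2 * real n * (1/20)\<^sup>2)"
proof -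
  define m where "m = nat \<lfloor>(45/100) * real n\<rfloor>"
  have mle: "real m \<le> (45/100) * real n"
  proof -
    have "real m = real_of_int \<lfloor>(45/100) * real n\<rfloor>" unfolding m_def by simp
    also have "\<dots> \<le> (45/100) * real n" by (rule of_int_floor_le)
    finally show ?thesis .
  qed
  define S where "S = {(V, T, Y). subseq (bitdrop_Z V T m) (map Y [1..<n+1])}"
  have sub: "S \<subseteq> E1 n"
  proof
    fix w assume "w \<in> S"
    then obtain V T Y where w: "w = (V, T, Y)" and h: "subseq (bitdrop_Z V T m) (map Y [1..<n+1])"
      unfolding S_def by auto
    have "lcs_len (bitdrop_Z V T k) (map Y [1..<n+1]) = k" if "k \<in> {1..m}" for k
    proof -
      have "subseq (bitdrop_Z V T k) (map Y [1..<n+1])"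
        using subseq_Z_mono[of k m V T] that h subseq_order.order_trans by auto
      then show ?thesis by (simp add: lcs_len_subseq length_Z)
    qed
    then show "w \<in> E1 n" unfolding E1_def w m_def by auto
  qed
  let ?A = "Pi_pmf {1..n} False (\<lambda>_. bernoulli_pmf (1/2))"
  let ?Tm = "Pi_pmf {3..n} 0 (\<lambda>k. pmf_of_set {2..k - 1})"
  have set1: "{1..n} = {1..<1+n}" by auto
  have lst: "[1..<n+1] = [1..<1+n]" by simp
  have "emeasure (measure_pmf (bitdrop_law n)) S =
     (\<integral>\<^sup>+V. \<integral>\<^sup>+T. emeasure (measure_pmf ?A) {Y. subseq (bitdrop_Z V T m) (map Y [1..<n+1])} \<partial>?Tm \<partial>?A)"
    unfolding bitdrop_law_def S_def emeasure_pair_pmf_sections by simp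
  also have "\<dots> = (\<integral>\<^sup>+V. \<integral>\<^sup>+T. emeasure (measure_pmf (binomial_pmf n (1/2))) {m..} \<partial>?Tm \<partial>?A)"
    unfolding set1 lst Pi_subseq length_Z ..
  also have "\<dots> = emeasure (measure_pmf (binomial_pmf n (1/2))) {m..}"
    by (simp add: measure_pmf.emeasure_space_1[simplified])
  finally have "measure_pmf.prob (bitdrop_law n) S = measure_pmf.prob (binomial_pmf n (1/2)) {m..}"
    by (simp add: measure_pmf.emeasure_eq_measure)
  moreover have "measure_pmf.prob (bitdrop_law n) S \<le> measure_pmf.prob (bitdrop_law n) (E1 n)"
    using sub by (intro measure_pmf.finite_measure_mono) auto
  ultimately show ?thesis using tail_bound[OF n mle] by linarith
qed

theorem lemma6:
  shows "(\<lambda>n. measure_pmf.prob (bitdrop_law n) (E1 n)) \<longlonglongrightarrow> 1"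
proof (rule tendsto_sandwich[of "\<lambda>n. 1 - exp (-2 * real n * (1/20)\<^sup>2)" _ _ "\<lambda>_. 1"])
  show "\<forall>\<^sub>F n in sequentially. 1 - exp (-2 * real n * (1/20)\<^sup>2) \<le> measure_pmf.prob (bitdrop_law n) (E1 n)"
    using eventually_gt_at_top[of 0] by eventually_elim (rule main_bound)
  show "\<forall>\<^sub>F n in sequentially. measure_pmf.prob (bitdrop_law n) (E1 n) \<le> 1"
    by (simp add: measure_pmf.prob_le_1)
  show "(\<lambda>n. 1 - exp (-2 * real n * (1/20)\<^sup>2)) \<longlonglongrightarrow> 1"
    by real_asymp
  show "(\<lambda>n. 1::real) \<longlonglongrightarrow> 1" by simp
qed

end
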